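(* Let $Q$ be the quiver arising from a connected finite groupoid. Then $Q$ satisfies the quantum Yang–Baxter equation.
   Context: The quiver arising from a groupoid $\mathcal{G}$ (finitely many objects, finite hom-sets) has the objects as vertices and one arrow $x\to y$ for each morphism in $\mathrm{Hom}(x,y)$ (identities included); its adjacency matrix is $A_{xy}=|\mathrm{Hom}(x,y)|$. The groupoid is connected if $\mathrm{Hom}(x,y)\neq\emptyset$ for all objects $x,y$. An $m^2\times m^2$ matrix $X$ satisfies the quantum Yang–Baxter equation if $(X\otimes I_m)(I_m\otimes X)(X\otimes I_m)=(I_m\otimes X)(X\otimes I_m)(I_m\otimes X)$ ($\otimes$ the Kronecker product). A quiver with $m\times m$ adjacency matrix $A$ satisfies the quantum Yang–Baxter equation if the matrix $A\otimes A$ does. *)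

theory Defs
  imports "Jordan_Normal_Form.Matrix"
begin

definition groupoid :: "'o set \<Rightarrow> ('o \<Rightarrow> 'o \<Rightarrow> 'm set) \<Rightarrow> ('m \<Rightarrow> 'm \<Rightarrow> 'm)
    \<Rightarrow> ('o \<Rightarrow> 'm) \<Rightarrow> ('m \<Rightarrow> 'm) \<Rightarrow> bool" where
  "groupoid Ob Hom cmp ident iv \<longleftrightarrow>
     (\<forall>x\<in>Ob. \<forall>y\<in>Ob. \<forall>x'\<in>Ob. \<forall>y'\<in>Ob. (x, y) \<noteq> (x', y') \<longrightarrow> Hom x y \<inter> Hom x' y' = {}) \<and>
     (\<forall>x y. (x \<notin> Ob \<or> y \<notin> Ob) \<longrightarrow> Hom x y = {}) \<and>
     (\<forall>x\<in>Ob. \<forall>y\<in>Ob. \<forall>z\<in>Ob. \<forall>f\<in>Hom x y. \<forall>g\<in>Hom y z. cmp g f \<in> Hom x z) \<and>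
     (\<forall>w\<in>Ob. \<forall>x\<in>Ob. \<forall>y\<in>Ob. \<forall>z\<in>Ob. \<forall>f\<in>Hom w x. \<forall>g\<in>Hom x y. \<forall>h\<in>Hom y z.
        cmp h (cmp g f) = cmp (cmp h g) f) \<and>
     (\<forall>x\<in>Ob. ident x \<in> Hom x x) \<and>
     (\<forall>x\<in>Ob. \<forall>y\<in>Ob. \<forall>f\<in>Hom x y. cmp (ident y) f = f \<and> cmp f (ident x) = f) \<and>
     (\<forall>x\<in>Ob. \<forall>y\<in>Ob. \<forall>f\<in>Hom x y.
        iv f \<in> Hom y x \<and> cmp (iv f) f = ident x \<and> cmp f (iv f) = ident y)"

definition finite_groupoid where
  "finite_groupoid Ob Hom cmp ident iv \<longleftrightarrow> groupoid Ob Hom cmp ident iv \<and>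
     finite Ob \<and> (\<forall>x\<in>Ob. \<forall>y\<in>Ob. finite (Hom x y))"

definition connected_groupoid where
  "connected_groupoid Ob Hom \<longleftrightarrow> (\<forall>x\<in>Ob. \<forall>y\<in>Ob. Hom x y \<noteq> {})"

text \<open>Adjacency matrix of the quiver of the groupoid, w.r.t. an ordering
  enum : {0..<card Ob} -> Ob of the objects.\<close>
definition adj_matrix :: "'o set \<Rightarrow> ('o \<Rightarrow> 'o \<Rightarrow> 'm set) \<Rightarrow> (nat \<Rightarrow> 'o) \<Rightarrow> nat mat" where
  "adj_matrix Ob Hom enum = mat (card Ob) (card Ob) (\<lambda>(i, j). card (Hom (enum i) (enum j)))"

definition kron :: "'a::semiring_1 mat \<Rightarrow> 'a mat \<Rightarrow> 'a mat" where
  "kron A B = mat (dim_row A * dim_row B) (dim_col A * dim_col B)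
     (\<lambda>(i, j). A $$ (i div dim_row B, j div dim_col B) * B $$ (i mod dim_row B, j mod dim_col B))"

definition QYBE :: "nat \<Rightarrow> 'a::semiring_1 mat \<Rightarrow> bool" where
  "QYBE m X \<longleftrightarrow> X \<in> carrier_mat (m * m) (m * m) \<and>
     kron X (1\<^sub>m m) * kron (1\<^sub>m m) X * kron X (1\<^sub>m m) =
     kron (1\<^sub>m m) X * kron X (1\<^sub>m m) * kron (1\<^sub>m m) X"

text \<open>A quiver with m x m adjacency matrix A satisfies QYBE iff A \<otimes> A does.\<close>
definition quiver_QYBE :: "'a::semiring_1 mat \<Rightarrow> bool" where
  "quiver_QYBE A \<longleftrightarrow> QYBE (dim_row A) (kron A A)"

end

theory Submission
  imports Defs
begin

lemma sum_group: fixes n m :: nat shows "(\<Sum>k<n*m. f k) = (\<Sum>a<n. \<Sum>r<m. (f (a*m + r) :: 'a::comm_monoid_add))"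
proof -
  have "(\<Sum>k<n*m. f k) = (\<Sum>a<n. sum f {a*m..<a*m+m})" using sum.nat_group[where g=f and k=m and n=n] by simp
  also have "\<dots> = (\<Sum>a<n. \<Sum>r<m. f (a*m + r))"
  proof (rule sum.cong[OF refl])
    fix a
    have "sum f {0 + a*m..<m + a*m} = (\<Sum>r=0..<m. f (r + a*m))" by (rule sum.shift_bounds_nat_ivl)
    also have "\<dots> = (\<Sum>r<m. f (a*m + r))" by (simp only: atLeast0LessThan add.commute[of _ "a*m"])
    finally show "sum f {a*m..<a*m+m} = (\<Sum>r<m. f (a*m + r))" by (simp only: add_0 add.commute[of m])
  qed
  finally show ?thesis .
qed

lemma sum_cube: fixes m :: nat shows "(\<Sum>k\<in>{0..<m*m*m}. f k) = (\<Sum>a<m. \<Sum>b<m. \<Sum>r<m. (f (a*m*m + b*m + r) :: 'a::comm_monoid_add))"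
proof -
  have "(\<Sum>k\<in>{0..<m*m*m}. f k) = (\<Sum>k<m*(m*m). f k)" by (simp only: atLeast0LessThan mult.assoc)
  also have "\<dots> = (\<Sum>a<m. \<Sum>s<m*m. f (a*(m*m) + s))" by (rule sum_group)
  also have "\<dots> = (\<Sum>a<m. \<Sum>b<m. \<Sum>r<m. f (a*(m*m) + (b*m + r)))"
    by (rule sum.cong[OF refl], rule sum_group)
  finally show ?thesis by (simp only: mult.assoc add.assoc)
qed

lemma lt_aux: fixes m :: nat assumes "b < m" "r < m" shows "b*m + r < m*m"
proof -
  have "b*m + r < Suc b * m" using assms(2) by simp
  also have "Suc b * m \<le> m * m" using assms(1) by (intro mult_le_mono1) simp
  finally show ?thesis .
qed

lemma dm: assumes "b < m" "r < (m::nat)" shows "(a*m*m + b*m + r) mod m = r" "(a*m*m + b*m + r) div (m*m) = a"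
proof -
  have e1: "a*m*m + b*m + r = r + (a*m+b)*m" by (simp add: algebra_simps)
  have "(r + (a*m+b)*m) mod m = r mod m" by (rule mod_mult_self1)
  also have "\<dots> = r" by (rule mod_less[OF assms(2)])
  finally show "(a*m*m + b*m + r) mod m = r" unfolding e1 .
  have lt: "b*m + r < m*m" by (rule lt_aux[OF assms])
  have e2: "a*m*m + b*m + r = (b*m+r) + a*(m*m)" by (simp add: algebra_simps)
  have "((b*m+r) + a*(m*m)) div (m*m) = a + (b*m+r) div (m*m)"
    using lt by (intro div_mult_self1) linarith
  also have "\<dots> = a" using div_less[OF lt] by simp
  finally show "(a*m*m + b*m + r) div (m*m) = a" unfolding e2 .
qed

lemma cube_bnd: fixes m :: nat assumes "a<m" "b<m" "r<m" shows "a*m*m+b*m+r < m*m*m"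
proof -
  have "a*m*m+b*m+r = a*(m*m) + (b*m+r)" by (simp add: algebra_simps)
  also have "\<dots> < a*(m*m) + m*m" using lt_aux[OF assms(2,3)] by simp
  also have "\<dots> = Suc a * (m*m)" by simp
  also have "\<dots> \<le> m*(m*m)" using assms(1) by (intro mult_le_mono1) simp
  finally show ?thesis by (simp add: mult.assoc)
qed

lemma sum_cube_cond: fixes m :: nat
  assumes "\<And>a b r. a<m \<Longrightarrow> b<m \<Longrightarrow> r<m \<Longrightarrow> f (a*m*m+b*m+r) = g a b r"
  shows "(\<Sum>k\<in>{0..<m*m*m}. f k) = (\<Sum>a<m. \<Sum>b<m. \<Sum>r<m. (g a b r :: 'a::comm_monoid_add))"
  unfolding sum_cube using assms by (intro sum.cong refl) auto

lemma index_kron: "i < dim_row A * dim_row B \<Longrightarrow> j < dim_col A * dim_col B \<Longrightarrow>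
  kron A B $$ (i,j) = A $$ (i div dim_row B, j div dim_col B) * B $$ (i mod dim_row B, j mod dim_col B)"
  unfolding kron_def by simp
lemma dim_kron[simp]: "dim_row (kron A B) = dim_row A * dim_row B" "dim_col (kron A B) = dim_col A * dim_col B"
  unfolding kron_def by simp_all
lemma bnd: fixes m :: nat assumes "i < m*m*m" shows "0 < m" "i mod m < m" "i div (m*m) < m" "i div m < m*m"
proof -
  show "0 < m" using assms by (cases m) auto
  then show "i mod m < m" by simp
  show "i div (m*m) < m" using assms by (simp add: less_mult_imp_div_less)
  show "i div m < m*m" using assms by (metis less_mult_imp_div_less mult.commute)
qed
lemma T1: fixes c :: nat assumes ij: "i < m*m*m" "j < m*m*m"
  shows "kron (mat (m*m) (m*m) (\<lambda>_. c)) (1\<^sub>m m) $$ (i,j) = (if i mod m = j mod m then c else 0)"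
proof -
  note b = bnd[OF ij(1)] bnd[OF ij(2)]
  have "kron (mat (m*m) (m*m) (\<lambda>_. c)) (1\<^sub>m m) $$ (i,j) = 
     mat (m*m) (m*m) (\<lambda>_. c) $$ (i div m, j div m) * (1\<^sub>m m :: nat mat) $$ (i mod m, j mod m)"
    by (rule trans[OF index_kron]) (use ij in simp_all)
  also have "\<dots> = c * (if i mod m = j mod m then 1 else 0)"
    by (simp only: index_mat(1) index_one_mat b split: prod.splits)
  finally show ?thesis by simp
qed
lemma T2: fixes c :: nat assumes ij: "i < m*m*m" "j < m*m*m"
  shows "kron (1\<^sub>m m) (mat (m*m) (m*m) (\<lambda>_. c)) $$ (i,j) = (if i div (m*m) = j div (m*m) then c else 0)"
proof -
  note b = bnd[OF ij(1)] bnd[OF ij(2)]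
  have "kron (1\<^sub>m m) (mat (m*m) (m*m) (\<lambda>_. c)) $$ (i,j) = 
     (1\<^sub>m m :: nat mat) $$ (i div (m*m), j div (m*m)) * mat (m*m) (m*m) (\<lambda>_. c) $$ (i mod (m*m), j mod (m*m))"
    by (rule trans[OF index_kron]) (use ij in \<open>simp_all add: mult.assoc\<close>)
  also have "\<dots> = (if i div (m*m) = j div (m*m) then 1 else 0) * c"
  proof -
    have "i mod (m*m) < m*m" "j mod (m*m) < m*m" using b(1) by simp_all
    then show ?thesis by (simp only: index_mat(1) index_one_mat b split: prod.splits)
  qed
  finally show ?thesis by simp
qed
lemma hom_card_le:
  assumes G: "groupoid Ob Hom cmp ident iv" and fin: "\<forall>x\<in>Ob. \<forall>y\<in>Ob. finite (Hom x y)"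
    and con: "connected_groupoid Ob Hom"
    and xs: "x \<in> Ob" "y \<in> Ob" "z \<in> Ob" "w \<in> Ob"
  shows "card (Hom x y) \<le> card (Hom z w)"
proof -
  note G' = G[unfolded groupoid_def]
  have C3: "\<forall>x\<in>Ob. \<forall>y\<in>Ob. \<forall>z\<in>Ob. \<forall>f\<in>Hom x y. \<forall>g\<in>Hom y z. cmp g f \<in> Hom x z"
    using G' by (elim conjE)
  have C4: "\<forall>w\<in>Ob. \<forall>x\<in>Ob. \<forall>y\<in>Ob. \<forall>z\<in>Ob. \<forall>f\<in>Hom w x. \<forall>g\<in>Hom x y. \<forall>h\<in>Hom y z.
        cmp h (cmp g f) = cmp (cmp h g) f" using G' by (elim conjE)
  have C6: "\<forall>x\<in>Ob. \<forall>y\<in>Ob. \<forall>f\<in>Hom x y. cmp (ident y) f = f \<and> cmp f (ident x) = f" using G' by (elim conjE)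
  have C7: "\<forall>x\<in>Ob. \<forall>y\<in>Ob. \<forall>f\<in>Hom x y.
        iv f \<in> Hom y x \<and> cmp (iv f) f = ident x \<and> cmp f (iv f) = ident y" using G' by (elim conjE)
  have comp: "\<And>x y z f g. x\<in>Ob \<Longrightarrow> y\<in>Ob \<Longrightarrow> z\<in>Ob \<Longrightarrow> f\<in>Hom x y \<Longrightarrow> g\<in>Hom y z \<Longrightarrow> cmp g f \<in> Hom x z"
    by (rule C3[rule_format]) assumption+
  have assoc: "\<And>w x y z f g h. w\<in>Ob \<Longrightarrow> x\<in>Ob \<Longrightarrow> y\<in>Ob \<Longrightarrow> z\<in>Ob \<Longrightarrow> f\<in>Hom w x \<Longrightarrow> g\<in>Hom x y \<Longrightarrow> h\<in>Hom y z \<Longrightarrow>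
        cmp h (cmp g f) = cmp (cmp h g) f"
    by (rule C4[rule_format]) assumption+
  have idl: "\<And>x y f. x\<in>Ob \<Longrightarrow> y\<in>Ob \<Longrightarrow> f\<in>Hom x y \<Longrightarrow> cmp (ident y) f = f \<and> cmp f (ident x) = f"
    by (rule C6[rule_format]) assumption+
  have inv: "\<And>x y f. x\<in>Ob \<Longrightarrow> y\<in>Ob \<Longrightarrow> f\<in>Hom x y \<Longrightarrow> iv f \<in> Hom y x \<and> cmp (iv f) f = ident x \<and> cmp f (iv f) = ident y"
    by (rule C7[rule_format]) assumption+
  obtain g where g: "g \<in> Hom z x" using con xs unfolding connected_groupoid_def by blast
  obtain h where h: "h \<in> Hom y w" using con xs unfolding connected_groupoid_def by blast
  have ivh: "iv h \<in> Hom w y" "cmp (iv h) h = ident y" using inv[OF xs(2) xs(4) h] by auto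
  have ivg: "iv g \<in> Hom x z" "cmp g (iv g) = ident x" using inv[OF xs(3) xs(1) g] by auto
  define \<phi> where "\<phi> f = cmp h (cmp f g)" for f
  have cl: "cmp f g \<in> Hom z y" if "f \<in> Hom x y" for f using comp[OF xs(3) xs(1) xs(2) g that] .
  have "\<phi> ` Hom x y \<subseteq> Hom z w"
    unfolding \<phi>_def using comp[OF xs(3) xs(2) xs(4) cl h] by blast
  moreover have "inj_on \<phi> (Hom x y)"
  proof (rule inj_onI)
    fix f1 f2 assume f: "f1 \<in> Hom x y" "f2 \<in> Hom x y" "\<phi> f1 = \<phi> f2"
    have bk: "cmp (cmp (iv h) (\<phi> f)) (iv g) = f" if "f \<in> Hom x y" for f
    proof -
      have "cmp (iv h) (\<phi> f) = cmp (cmp (iv h) h) (cmp f g)"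
        unfolding \<phi>_def by (rule assoc[OF xs(3) xs(2) xs(4) xs(2) cl[OF that] h ivh(1)])
      also have "\<dots> = cmp f g" unfolding ivh(2) by (rule conjunct1[OF idl[OF xs(3) xs(2) cl[OF that]]])
      finally have e: "cmp (iv h) (\<phi> f) = cmp f g" .
      have "cmp (cmp f g) (iv g) = cmp f (cmp g (iv g))"
        by (rule assoc[OF xs(1) xs(3) xs(1) xs(2) ivg(1) g that, symmetric])
      also have "\<dots> = f" unfolding ivg(2) by (rule conjunct2[OF idl[OF xs(1) xs(2) that]])
      finally show ?thesis unfolding e .
    qed
    show "f1 = f2" using bk[OF f(1)] bk[OF f(2)] f(3) by metis
  qed
  moreover have "finite (Hom z w)" using fin xs by blast
  ultimately show ?thesis by (metis card_inj_on_le)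
qed

lemma mult_entry: fixes A B :: "'a::semiring_0 mat"
  assumes "i < dim_row A" "j < dim_col B" "dim_col A = dim_row B"
  shows "(A*B)$$(i,j) = (\<Sum>l\<in>{0..<dim_row B}. A$$(i,l)*B$$(l,j))"
  using assms by (simp add: scalar_prod_def)

lemma ev1: fixes x :: nat shows "K<m \<Longrightarrow> I<m \<Longrightarrow> (\<Sum>a<m. \<Sum>b<m. \<Sum>r<m. if a = K then (if r = I then x else 0) else 0) = m*x"
proof -
  assume KI: "K<m" "I<m"
  have e: "(\<Sum>r<m. if a = K then (if r = I then x else 0) else 0) = (if a = K then x else 0)" for a
    using KI by (cases "a = K") simp_all
  have "(\<Sum>a<m. \<Sum>b<m. \<Sum>r<m. if a = K then (if r = I then x else 0) else (0::nat)) = (\<Sum>a<m. m * (if a = K then x else 0))"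
    unfolding e by simp
  also have "\<dots> = m * (\<Sum>a<m. (if a = K then x else 0))" by (rule sum_distrib_left[symmetric])
  also have "\<dots> = m * x" using KI by simp
  finally show ?thesis .
qed
lemma ev2: fixes x :: nat shows "I<m \<Longrightarrow> (\<Sum>a<m. \<Sum>b<m. \<Sum>r<m. if r = I then x else 0) = m*m*x"
  by simp
lemma ev3: fixes x :: nat shows "K<m \<Longrightarrow> (\<Sum>a<m. \<Sum>b<m. \<Sum>r<m. if a = K then x else 0) = m*m*x"
proof -
  assume KI: "K<m"
  have "(\<Sum>a<m. \<Sum>b<m. \<Sum>r<m. if a = K then x else (0::nat)) = (\<Sum>a<m. (m*m) * (if a = K then x else 0))"
    by (simp add: mult.assoc)
  also have "\<dots> = (m*m) * (\<Sum>a<m. (if a = K then x else 0))" by (rule sum_distrib_left[symmetric])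
  also have "\<dots> = m * m * x" using KI by simp
  finally show ?thesis .
qed

lemma const_QYBE:
  fixes c :: nat
  shows "QYBE m (mat (m*m) (m*m) (\<lambda>_. c))"
proof -
  let ?X = "mat (m*m) (m*m) (\<lambda>_. c)"
  let ?N = "m*m*m"
  define L where "L = kron ?X (1\<^sub>m m)"
  define R where "R = kron (1\<^sub>m m) ?X"
  have Le: "L $$ (i,j) = (if i mod m = j mod m then c else 0)" if "i < ?N" "j < ?N" for i j
    unfolding L_def by (rule T1[OF that])
  have Re: "R $$ (i,j) = (if i div (m*m) = j div (m*m) then c else 0)" if "i < ?N" "j < ?N" for i j
    unfolding R_def by (rule T2[OF that])
  have dL: "dim_row L = ?N" "dim_col L = ?N" "dim_row R = ?N" "dim_col R = ?N"
    by (simp_all add: L_def R_def mult.assoc)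
  have LR: "L * R = mat ?N ?N (\<lambda>_. m*(c*c))"
  proof (rule eq_matI)
    fix i k assume "i < dim_row (mat ?N ?N (\<lambda>_. m*(c*c)))" "k < dim_col (mat ?N ?N (\<lambda>_. m*(c*c)))"
    then have ik: "i < ?N" "k < ?N" by simp_all
    have "(L*R) $$ (i,k) = (\<Sum>l\<in>{0..<?N}. L $$ (i,l) * R $$ (l,k))"
      using ik by (subst mult_entry) (simp_all add: dL)
    also have "\<dots> = (\<Sum>a<m. \<Sum>b<m. \<Sum>r<m. if a = k div (m*m) then (if r = i mod m then c*c else 0) else 0)"
    proof (rule sum_cube_cond)
      fix a b r assume abr: "a<m" "b<m" "r<m"
      have l: "a*m*m+b*m+r < ?N" by (rule cube_bnd[OF abr])
      show "L $$ (i, a*m*m+b*m+r) * R $$ (a*m*m+b*m+r, k) = (if a = k div (m*m) then (if r = i mod m then c*c else 0) else 0)"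
        unfolding Le[OF ik(1) l] Re[OF l ik(2)] dm[OF abr(2) abr(3)]
        by (cases "r = i mod m"; cases "a = k div (m*m)") simp_all
    qed
    also have "\<dots> = m*(c*c)" using bnd[OF ik(1)] bnd[OF ik(2)] by (intro ev1) assumption+
    finally show "(L*R) $$ (i,k) = mat ?N ?N (\<lambda>_. m*(c*c)) $$ (i,k)" using ik by simp
  qed (simp_all add: dL)
  have RL: "R * L = mat ?N ?N (\<lambda>_. m*(c*c))"
  proof (rule eq_matI)
    fix i k assume "i < dim_row (mat ?N ?N (\<lambda>_. m*(c*c)))" "k < dim_col (mat ?N ?N (\<lambda>_. m*(c*c)))"
    then have ik: "i < ?N" "k < ?N" by simp_all
    have "(R*L) $$ (i,k) = (\<Sum>l\<in>{0..<?N}. R $$ (i,l) * L $$ (l,k))"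
      using ik by (subst mult_entry) (simp_all add: dL)
    also have "\<dots> = (\<Sum>a<m. \<Sum>b<m. \<Sum>r<m. if a = i div (m*m) then (if r = k mod m then c*c else 0) else 0)"
    proof (rule sum_cube_cond)
      fix a b r assume abr: "a<m" "b<m" "r<m"
      have l: "a*m*m+b*m+r < ?N" by (rule cube_bnd[OF abr])
      show "R $$ (i, a*m*m+b*m+r) * L $$ (a*m*m+b*m+r, k) = (if a = i div (m*m) then (if r = k mod m then c*c else 0) else 0)"
        unfolding Re[OF ik(1) l] Le[OF l ik(2)] dm[OF abr(2) abr(3)]
        by (cases "r = k mod m"; cases "a = i div (m*m)") simp_all
    qed
    also have "\<dots> = m*(c*c)" using bnd[OF ik(1)] bnd[OF ik(2)] by (intro ev1) assumption+
    finally show "(R*L) $$ (i,k) = mat ?N ?N (\<lambda>_. m*(c*c)) $$ (i,k)" using ik by simp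
  qed (simp_all add: dL)
  have LRL: "L * R * L = mat ?N ?N (\<lambda>_. m*m*(m*(c*c)*c))"
  proof (rule eq_matI)
    fix i k assume "i < dim_row (mat ?N ?N (\<lambda>_. m*m*(m*(c*c)*c)))" "k < dim_col (mat ?N ?N (\<lambda>_. m*m*(m*(c*c)*c)))"
    then have ik: "i < ?N" "k < ?N" by simp_all
    have "(L*R*L) $$ (i,k) = (\<Sum>l\<in>{0..<?N}. (L*R) $$ (i,l) * L $$ (l,k))"
      using ik by (subst mult_entry) (simp_all add: dL LR)
    also have "\<dots> = (\<Sum>a<m. \<Sum>b<m. \<Sum>r<m. if r = k mod m then m*(c*c)*c else 0)"
    proof (rule sum_cube_cond)
      fix a b r assume abr: "a<m" "b<m" "r<m"
      have l: "a*m*m+b*m+r < ?N" by (rule cube_bnd[OF abr])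
      show "(L*R) $$ (i, a*m*m+b*m+r) * L $$ (a*m*m+b*m+r, k) = (if r = k mod m then m*(c*c)*c else 0)"
        unfolding Le[OF l ik(2)] dm[OF abr(2) abr(3)] LR index_mat(1)[OF ik(1) l] 
        by (cases "r = k mod m") simp_all
    qed
    also have "\<dots> = m*m*(m*(c*c)*c)" using bnd[OF ik(1)] bnd[OF ik(2)] by (intro ev2) assumption+
    finally show "(L*R*L) $$ (i,k) = mat ?N ?N (\<lambda>_. m*m*(m*(c*c)*c)) $$ (i,k)" using ik by simp
  qed (simp_all add: dL LR)
  have RLR: "R * L * R = mat ?N ?N (\<lambda>_. m*m*(m*(c*c)*c))"
  proof (rule eq_matI)
    fix i k assume "i < dim_row (mat ?N ?N (\<lambda>_. m*m*(m*(c*c)*c)))" "k < dim_col (mat ?N ?N (\<lambda>_. m*m*(m*(c*c)*c)))"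
    then have ik: "i < ?N" "k < ?N" by simp_all
    have "(R*L*R) $$ (i,k) = (\<Sum>l\<in>{0..<?N}. (R*L) $$ (i,l) * R $$ (l,k))"
      using ik by (subst mult_entry) (simp_all add: dL RL)
    also have "\<dots> = (\<Sum>a<m. \<Sum>b<m. \<Sum>r<m. if a = k div (m*m) then m*(c*c)*c else 0)"
    proof (rule sum_cube_cond)
      fix a b r assume abr: "a<m" "b<m" "r<m"
      have l: "a*m*m+b*m+r < ?N" by (rule cube_bnd[OF abr])
      show "(R*L) $$ (i, a*m*m+b*m+r) * R $$ (a*m*m+b*m+r, k) = (if a = k div (m*m) then m*(c*c)*c else 0)"
        unfolding Re[OF l ik(2)] dm[OF abr(2) abr(3)] RL index_mat(1)[OF ik(1) l] 
        by (cases "a = k div (m*m)") simp_all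
    qed
    also have "\<dots> = m*m*(m*(c*c)*c)" using bnd[OF ik(1)] bnd[OF ik(2)] by (intro ev3) assumption+
    finally show "(R*L*R) $$ (i,k) = mat ?N ?N (\<lambda>_. m*m*(m*(c*c)*c)) $$ (i,k)" using ik by simp
  qed (simp_all add: dL RL)
  have eq: "L*R*L = R*L*R" unfolding LRL RLR by (rule refl)
  have car: "?X \<in> carrier_mat (m*m) (m*m)" by (rule mat_carrier)
  show ?thesis unfolding QYBE_def using car eq unfolding L_def R_def by (rule conjI)
qed

theorem corollary2p14:
  fixes Ob :: "'o set" and Hom :: "'o \<Rightarrow> 'o \<Rightarrow> 'm set"
    and cmp :: "'m \<Rightarrow> 'm \<Rightarrow> 'm" and ident :: "'o \<Rightarrow> 'm" and iv :: "'m \<Rightarrow> 'm"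
    and enum :: "nat \<Rightarrow> 'o"
  assumes "finite_groupoid Ob Hom cmp ident iv"
    and "connected_groupoid Ob Hom"
    and "bij_betw enum {0..<card Ob} Ob"
  shows "quiver_QYBE (adj_matrix Ob Hom enum)"
proof -
  let ?n = "card Ob"
  let ?A = "adj_matrix Ob Hom enum"
  define k where "k = card (Hom (enum 0) (enum 0))"
  have G: "groupoid Ob Hom cmp ident iv" and fin: "\<forall>x\<in>Ob. \<forall>y\<in>Ob. finite (Hom x y)"
    using assms(1) unfolding finite_groupoid_def by auto
  have en: "enum p \<in> Ob" if "p < ?n" for p using assms(3) that unfolding bij_betw_def by auto
  have Ae: "?A $$ (p,q) = k" if "p < ?n" "q < ?n" for p q
  proof -
    have z: "0 < ?n" using that by simp
    have "card (Hom (enum p) (enum q)) = k" unfolding k_def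
      using hom_card_le[OF G fin assms(2) en[OF that(1)] en[OF that(2)] en[OF z] en[OF z]]
            hom_card_le[OF G fin assms(2) en[OF z] en[OF z] en[OF that(1)] en[OF that(2)]] by simp
    then show ?thesis using that unfolding adj_matrix_def by simp
  qed
  have dA: "dim_row ?A = ?n" "dim_col ?A = ?n" unfolding adj_matrix_def by simp_all
  have K: "kron ?A ?A = mat (?n*?n) (?n*?n) (\<lambda>_. k*k)"
  proof (rule eq_matI)
    fix i j assume "i < dim_row (mat (?n*?n) (?n*?n) (\<lambda>_. k*k))" "j < dim_col (mat (?n*?n) (?n*?n) (\<lambda>_. k*k))"
    then have ij: "i < ?n*?n" "j < ?n*?n" by simp_all
    have z: "0 < ?n" using ij by (cases ?n) auto
    have b: "i div ?n < ?n" "j div ?n < ?n" "i mod ?n < ?n" "j mod ?n < ?n"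
      using ij z by (simp_all add: less_mult_imp_div_less)
    have "kron ?A ?A $$ (i,j) = ?A $$ (i div ?n, j div ?n) * ?A $$ (i mod ?n, j mod ?n)"
      using ij by (subst index_kron) (simp_all add: dA)
    also have "\<dots> = k*k" using Ae b by simp
    finally show "kron ?A ?A $$ (i,j) = mat (?n*?n) (?n*?n) (\<lambda>_. k*k) $$ (i,j)" using ij by simp
  qed (simp_all add: dA)
  show ?thesis unfolding quiver_QYBE_def dA K by (rule const_QYBE)
qed

end
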